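(* Let $\Omega$ be a semigroup and $(\mathcal{A},\{\eta^1,\eta^2,\dots\})$ a $Dend_\infty$-family algebra relative to $\Omega$. Then $(\mathcal{A},\{\mu^1,\mu^2,\dots\})$ is an $A_\infty$-algebra relative to $\Omega$, where $\mu^k:=\eta^{k,[1]}+\cdots+\eta^{k,[k]}$ (i.e. $\mu^k_{\alpha_1,\dots,\alpha_k}=\sum_{r=1}^k\eta^{k,[r]}_{\alpha_1,\dots,\alpha_k}$) for all $k\ge1$.
   Context: $\mathbf{k}$ is a commutative unital ring of characteristic $0$; $\Omega$ a semigroup; $\mathcal{A}=\oplus_{i\in\mathbb{Z}}\mathcal{A}^i$ a graded $\mathbf{k}$-module. $C_k=\{[1],\dots,[k]\}$ formal symbols. For $m,n\ge1$, $1\le i\le m$, $1\le r\le m+n-1$: $R_0[r]$ is $[r]$ if $r\le i-1$, $[i]$ if $i\le r\le i+n-1$, $[r-n+1]$ if $r\ge i+n$; $R_i[r]$ is $[r-i+1]$ if $i\le r\le i+n-1$ and the formal sum $[1]+\cdots+[n]$ otherwise; $\eta^{n,[1]+\cdots+[n]}:=\sum_{s}\eta^{n,[s]}$. Sign $\pm:=(-1)^{i(n+1)+n(|a_1|+\cdots+|a_{i-1}|)}$. A $Dend_\infty$-family algebra: for each $k\ge1$, a $k$-tuple $\eta^k=(\eta^{k,[1]},\dots,\eta^{k,[k]})$, each $\eta^{k,[r]}=\{\eta^{k,[r]}_{\alpha_1,\dots,\alpha_k}:\mathcal{A}^{\otimes k}\to\mathcal{A}\}_{\alpha_j\in\Omega}$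 multilinear of degree $k-2$, with $\eta^{k,[r]}_{\alpha_1,\dots,\alpha_k}$ independent of $\alpha_r$, satisfying for all $N\ge1$, $[r]\in C_N$: $\sum_{m+n=N+1}\sum_{i=1}^m\pm\,\eta^{m,R_0[r]}_{\alpha_1,\dots,\alpha_i\cdots\alpha_{i+n-1},\dots,\alpha_N}\big(a_1,\dots,a_{i-1},\eta^{n,R_i[r]}_{\alpha_i,\dots,\alpha_{i+n-1}}(a_i,\dots,a_{i+n-1}),a_{i+n},\dots,a_N\big)=0$. An $A_\infty$-algebra relative to $\Omega$: collections $\mu^k=\{\mu^k_{\alpha_1,\dots,\alpha_k}:\mathcal{A}^{\otimes k}\to\mathcal{A}\}_{\alpha_j\in\Omega}$ of multilinear maps of degree $k-2$, $k\ge1$, with $\sum_{m+n=N+1}\sum_{i=1}^m\pm\,\mu^m_{\alpha_1,\dots,\alpha_i\cdots\alpha_{i+n-1},\dots,\alpha_N}\big(a_1,\dots,a_{i-1},\mu^n_{\alpha_i,\dots,\alpha_{i+n-1}}(a_i,\dots,a_{i+n-1}),a_{i+n},\dots,a_N\big)=0$ for all $N\ge1$, homogeneous $a_j$ and $\alpha_j\in\Omega$ (in the outer label the block $\alpha_i,\dots,\alpha_{i+n-1}$ is replaced by its product). *)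

theory Defs
  imports Complex_Main
begin

text \<open>Graded k-module A = (+)_i A^i: 'a is a k-module via scale, G i is the
  homogeneous component A^i, and every element is uniquely a finite sum of
  homogeneous components.\<close>
definition graded_module :: "('k::comm_ring_1 \<Rightarrow> 'a::ab_group_add \<Rightarrow> 'a) \<Rightarrow> (int \<Rightarrow> 'a set) \<Rightarrow> bool" where
  "graded_module scale G \<longleftrightarrow> module scale \<and> (\<forall>i. module.subspace scale (G i)) \<and>
     (\<forall>x. \<exists>!f. finite {i. f i \<noteq> 0} \<and> (\<forall>i. f i \<in> G i) \<and> x = sum f {i. f i \<noteq> 0})"

fun sprod :: "'o::semigroup_mult list \<Rightarrow> 'o" where
  "sprod [x] = x"
| "sprod (x # y # ys) = x * sprod (y # ys)"
| "sprod [] = undefined"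

definition multilinear_deg ::
  "('k::comm_ring_1 \<Rightarrow> 'a::ab_group_add \<Rightarrow> 'a) \<Rightarrow> (int \<Rightarrow> 'a set) \<Rightarrow> nat \<Rightarrow> ('a list \<Rightarrow> 'a) \<Rightarrow> bool" where
  "multilinear_deg scale G k f \<longleftrightarrow>
     (\<forall>as j x y. length as = k \<and> j < k \<longrightarrow> f (as[j := x + y]) = f (as[j := x]) + f (as[j := y])) \<and>
     (\<forall>as j c x. length as = k \<and> j < k \<longrightarrow> f (as[j := scale c x]) = scale c (f (as[j := x]))) \<and>
     (\<forall>as ds. length as = k \<and> length ds = k \<and> (\<forall>j<k. as ! j \<in> G (ds ! j)) \<longrightarrow>
        f as \<in> G (sum_list ds + int k - 2))"

definition stasheff_sign :: "nat \<Rightarrow> nat \<Rightarrow> int list \<Rightarrow> 'k::comm_ring_1" where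
  "stasheff_sign i n ds =
     (if even (int (i * (n + 1)) + int n * sum_list (take (i - 1) ds)) then 1 else -1)"

text \<open>Outer labels: block alpha_i..alpha_{i+n-1} replaced by its product (i 1-based).\<close>
definition lab_comp :: "nat \<Rightarrow> nat \<Rightarrow> 'o::semigroup_mult list \<Rightarrow> 'o list" where
  "lab_comp i n al = take (i - 1) al @ [sprod (take n (drop (i - 1) al))] @ drop (i - 1 + n) al"

definition arg_comp :: "nat \<Rightarrow> nat \<Rightarrow> 'a \<Rightarrow> 'a list \<Rightarrow> 'a list" where
  "arg_comp i n b as = take (i - 1) as @ [b] @ drop (i - 1 + n) as"

definition blk :: "nat \<Rightarrow> nat \<Rightarrow> 'x list \<Rightarrow> 'x list" where
  "blk i n xs = take n (drop (i - 1) xs)"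

definition R0 :: "nat \<Rightarrow> nat \<Rightarrow> nat \<Rightarrow> nat" where
  "R0 i n r = (if r \<le> i - 1 then r else if r \<le> i + n - 1 then i else r - n + 1)"

definition eta_Ri ::
  "(nat \<Rightarrow> nat \<Rightarrow> 'o list \<Rightarrow> 'a list \<Rightarrow> 'a::ab_group_add) \<Rightarrow> nat \<Rightarrow> nat \<Rightarrow> nat \<Rightarrow> 'o list \<Rightarrow> 'a list \<Rightarrow> 'a" where
  "eta_Ri \<eta> i n r al as =
     (if i \<le> r \<and> r \<le> i + n - 1 then \<eta> n (r - i + 1) al as else (\<Sum>s = 1..n. \<eta> n s al as))"

text \<open>Dend_infinity-family algebra relative to Omega: eta k r al as = eta^{k,[r]}_{al}(as).\<close>
definition dend_inf_family ::
  "('k::comm_ring_1 \<Rightarrow> 'a::ab_group_add \<Rightarrow> 'a) \<Rightarrow> (int \<Rightarrow> 'a set) \<Rightarrow>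
   (nat \<Rightarrow> nat \<Rightarrow> 'o::semigroup_mult list \<Rightarrow> 'a list \<Rightarrow> 'a) \<Rightarrow> bool" where
  "dend_inf_family scale G \<eta> \<longleftrightarrow>
     (\<forall>k\<ge>1. \<forall>r\<in>{1..k}. \<forall>al. length al = k \<longrightarrow> multilinear_deg scale G k (\<eta> k r al)) \<and>
     (\<forall>k\<ge>1. \<forall>r\<in>{1..k}. \<forall>al x as. length al = k \<longrightarrow> \<eta> k r (al[r - 1 := x]) as = \<eta> k r al as) \<and>
     (\<forall>N\<ge>1. \<forall>r\<in>{1..N}. \<forall>al as ds. length al = N \<and> length as = N \<and> length ds = N \<and>
        (\<forall>j<N. as ! j \<in> G (ds ! j)) \<longrightarrow>
        (\<Sum>m = 1..N. \<Sum>i = 1..m.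
           scale (stasheff_sign i (N + 1 - m) ds)
             (\<eta> m (R0 i (N + 1 - m) r) (lab_comp i (N + 1 - m) al)
               (arg_comp i (N + 1 - m)
                  (eta_Ri \<eta> i (N + 1 - m) r (blk i (N + 1 - m) al) (blk i (N + 1 - m) as)) as))) = 0)"

text \<open>A_infinity-algebra relative to Omega: mu k al as = mu^k_{al}(as).\<close>
definition A_inf_algebra ::
  "('k::comm_ring_1 \<Rightarrow> 'a::ab_group_add \<Rightarrow> 'a) \<Rightarrow> (int \<Rightarrow> 'a set) \<Rightarrow>
   (nat \<Rightarrow> 'o::semigroup_mult list \<Rightarrow> 'a list \<Rightarrow> 'a) \<Rightarrow> bool" where
  "A_inf_algebra scale G \<mu> \<longleftrightarrow>
     (\<forall>k\<ge>1. \<forall>al. length al = k \<longrightarrow> multilinear_deg scale G k (\<mu> k al)) \<and>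
     (\<forall>N\<ge>1. \<forall>al as ds. length al = N \<and> length as = N \<and> length ds = N \<and>
        (\<forall>j<N. as ! j \<in> G (ds ! j)) \<longrightarrow>
        (\<Sum>m = 1..N. \<Sum>i = 1..m.
           scale (stasheff_sign i (N + 1 - m) ds)
             (\<mu> m (lab_comp i (N + 1 - m) al)
               (arg_comp i (N + 1 - m)
                  (\<mu> (N + 1 - m) (blk i (N + 1 - m) al) (blk i (N + 1 - m) as)) as))) = 0)"

end

theory Submission
  imports Defs
begin

lemma ml_zero:
  assumes "multilinear_deg scale G k f" "length as = k" "j < k"
  shows "f (as[j := 0]) = 0"
proof -
  have "f (as[j := 0 + 0]) = f (as[j := 0]) + f (as[j := 0])"
    using assms unfolding multilinear_deg_def by blast
  then show ?thesis by simp
qed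

lemma ml_sum:
  assumes "multilinear_deg scale G k f" "length as = k" "j < k" "finite A"
  shows "f (as[j := sum g A]) = (\<Sum>t\<in>A. f (as[j := g t]))"
  using assms(4)
proof (induction A rule: finite_induct)
  case empty
  then show ?case using ml_zero[OF assms(1-3)] by simp
next
  case (insert x F)
  have "f (as[j := g x + sum g F]) = f (as[j := g x]) + f (as[j := sum g F])"
    using assms unfolding multilinear_deg_def by blast
  then show ?case using insert by simp
qed

lemma split3:
  fixes P :: "nat \<Rightarrow> 'a::comm_monoid_add"
  assumes "1 \<le> i" "i \<le> m" "1 \<le> n"
  shows "(\<Sum>r=1..m+n-1. P r) = (\<Sum>r=1..i-1. P r) + (\<Sum>r=i..i+n-1. P r) + (\<Sum>r=i+n..m+n-1. P r)"
proof -
  have e: "{1..m+n-1} = ({1..i-1} \<union> {i..i+n-1}) \<union> {i+n..m+n-1}" using assms by auto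
  have a: "sum P (({1..i-1} \<union> {i..i+n-1}) \<union> {i+n..m+n-1}) = sum P ({1..i-1} \<union> {i..i+n-1}) + sum P {i+n..m+n-1}"
    by (rule sum.union_disjoint) (use assms in auto)
  have b: "sum P ({1..i-1} \<union> {i..i+n-1}) = sum P {1..i-1} + sum P {i..i+n-1}"
    by (rule sum.union_disjoint) auto
  show ?thesis unfolding e a b ..
qed

lemma split_m:
  fixes F :: "nat \<Rightarrow> 'a::comm_monoid_add"
  assumes "1 \<le> i" "i \<le> m"
  shows "(\<Sum>s=1..m. F s) = (\<Sum>s=1..i-1. F s) + F i + (\<Sum>s=i+1..m. F s)"
proof -
  have e: "{1..m} = ({1..i-1} \<union> {i}) \<union> {i+1..m}" using assms by auto
  have a: "sum F (({1..i-1} \<union> {i}) \<union> {i+1..m}) = sum F ({1..i-1} \<union> {i}) + sum F {i+1..m}"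
    by (rule sum.union_disjoint) auto
  have b: "sum F ({1..i-1} \<union> {i}) = sum F {1..i-1} + F i"
    by (subst sum.union_disjoint) auto
  show ?thesis unfolding e a b ..
qed

lemma len_lab: "1 \<le> i \<Longrightarrow> i \<le> m \<Longrightarrow> length al = m + n - 1 \<Longrightarrow> 1 \<le> n \<Longrightarrow>
   length (lab_comp i n al) = m"
  unfolding lab_comp_def by auto

lemma len_arg: "1 \<le> i \<Longrightarrow> i \<le> m \<Longrightarrow> length as = m + n - 1 \<Longrightarrow> 1 \<le> n \<Longrightarrow>
   length (arg_comp i n b as) = m"
  unfolding arg_comp_def by auto

lemma arg_upd: "1 \<le> i \<Longrightarrow> i - 1 < length as \<Longrightarrow>
   arg_comp i n b as = (arg_comp i n 0 as)[i - 1 := b]"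
  unfolding arg_comp_def by (simp add: list_update_append)

lemma key:
  assumes Hml: "\<And>s al. 1 \<le> s \<Longrightarrow> s \<le> m \<Longrightarrow> length al = m \<Longrightarrow> multilinear_deg scale G m (\<eta> m s al)"
    and i: "1 \<le> i" "i \<le> m" and n: "1 \<le> n"
    and al: "length al = m + n - 1" and as: "length as = m + n - 1"
  shows "(\<Sum>r=1..m+n-1. \<eta> m (R0 i n r) (lab_comp i n al)
               (arg_comp i n (eta_Ri \<eta> i n r bl bs) as))
       = (\<Sum>s=1..m. \<eta> m s (lab_comp i n al) (arg_comp i n (\<Sum>t=1..n. \<eta> n t bl bs) as))"
proof -
  define L where "L = lab_comp i n al"
  define A where "A = (\<lambda>b. arg_comp i n b as)"
  define S where "S = (\<Sum>t=1..n. \<eta> n t bl bs)"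
  define F where "F = (\<lambda>s. \<eta> m s L (A S))"
  define P where "P = (\<lambda>r. \<eta> m (R0 i n r) L (A (eta_Ri \<eta> i n r bl bs)))"
  have lL: "length L = m" using len_lab[OF i al n] L_def by simp
  have lA: "length (arg_comp i n 0 as) = m" using len_arg[OF i as n] by simp
  have Aeq: "\<And>b. A b = (arg_comp i n 0 as)[i - 1 := b]"
    unfolding A_def by (rule arg_upd) (use i n as in auto)
  have p1: "(\<Sum>r=1..i-1. P r) = (\<Sum>s=1..i-1. F s)"
    by (rule sum.cong) (use i n in \<open>auto simp: P_def R0_def eta_Ri_def F_def S_def\<close>)
  have "(\<Sum>r=i..i+n-1. P r) = (\<Sum>r=1+(i-1)..n+(i-1). P r)"
    using i n by (simp add: add.commute)
  also have "\<dots> = (\<Sum>t=1..n. P (t + (i - 1)))"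
    by (rule sum.shift_bounds_cl_nat_ivl)
  also have "\<dots> = (\<Sum>t=1..n. \<eta> m i L (A (\<eta> n t bl bs)))"
    by (rule sum.cong) (use i n in \<open>auto simp: P_def R0_def eta_Ri_def\<close>)
  also have "\<dots> = (\<Sum>t=1..n. \<eta> m i L ((arg_comp i n 0 as)[i - 1 := \<eta> n t bl bs]))"
    by (simp add: Aeq)
  also have "\<dots> = \<eta> m i L ((arg_comp i n 0 as)[i - 1 := S])"
    unfolding S_def
    by (rule ml_sum[of scale G m "\<eta> m i L" "arg_comp i n 0 as" "i - 1" "{1..n}" "\<lambda>t. \<eta> n t bl bs", symmetric]) (use Hml[OF i lL] lA i in auto)
  also have "\<dots> = F i" by (simp add: F_def Aeq)
  finally have p2: "(\<Sum>r=i..i+n-1. P r) = F i" .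
  have "(\<Sum>r=i+n..m+n-1. P r) = (\<Sum>r=(i+1)+(n-1)..m+(n-1). P r)"
    using i n by (simp add: add.commute)
  also have "\<dots> = (\<Sum>s=i+1..m. P (s + (n - 1)))"
    by (rule sum.shift_bounds_cl_nat_ivl)
  also have "\<dots> = (\<Sum>s=i+1..m. F s)"
    by (rule sum.cong) (use i n in \<open>auto simp: P_def R0_def eta_Ri_def F_def S_def\<close>)
  finally have p3: "(\<Sum>r=i+n..m+n-1. P r) = (\<Sum>s=i+1..m. F s)" .
  have "(\<Sum>r=1..m+n-1. P r) = (\<Sum>s=1..m. F s)"
    using split3[OF i n, of P] split_m[OF i, of F] p1 p2 p3 by simp
  then show ?thesis unfolding P_def F_def L_def A_def S_def .
qed

theorem proposition5p10:
  fixes scale :: "'k::comm_ring_1 \<Rightarrow> 'a::ab_group_add \<Rightarrow> 'a"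
    and G :: "int \<Rightarrow> 'a set"
    and \<eta> :: "nat \<Rightarrow> nat \<Rightarrow> 'o::semigroup_mult list \<Rightarrow> 'a list \<Rightarrow> 'a"
  assumes "CHAR('k) = 0"
    and "graded_module scale G"
    and "dend_inf_family scale G \<eta>"
  shows "A_inf_algebra scale G (\<lambda>k al as. \<Sum>r = 1..k. \<eta> k r al as)"
proof -
  have M: "module scale" and SS: "\<And>i. module.subspace scale (G i)"
    using assms(2) unfolding graded_module_def by auto
  have D1: "\<And>k r al. k \<ge> 1 \<Longrightarrow> 1 \<le> r \<Longrightarrow> r \<le> k \<Longrightarrow> length al = k \<Longrightarrow> multilinear_deg scale G k (\<eta> k r al)"
    using assms(3) unfolding dend_inf_family_def by auto
  have D3: "\<And>N r al as ds. N \<ge> 1 \<Longrightarrow> 1 \<le> r \<Longrightarrow> r \<le> N \<Longrightarrow> length al = N \<Longrightarrow> length as = N \<Longrightarrow> length ds = N \<Longrightarrow>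
        (\<forall>j<N. as ! j \<in> G (ds ! j)) \<Longrightarrow>
        (\<Sum>m = 1..N. \<Sum>i = 1..m.
           scale (stasheff_sign i (N + 1 - m) ds)
             (\<eta> m (R0 i (N + 1 - m) r) (lab_comp i (N + 1 - m) al)
               (arg_comp i (N + 1 - m)
                  (eta_Ri \<eta> i (N + 1 - m) r (blk i (N + 1 - m) al) (blk i (N + 1 - m) as)) as))) = 0"
    using assms(3) unfolding dend_inf_family_def by auto
  have part1: "multilinear_deg scale G k (\<lambda>as. \<Sum>r = 1..k. \<eta> k r al as)" if k: "k \<ge> 1" "length al = k" for k al
  proof -
    have ml: "\<And>r. r \<in> {1..k} \<Longrightarrow> multilinear_deg scale G k (\<eta> k r al)" using D1 k by auto
    show ?thesis unfolding multilinear_deg_def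
    proof (intro conjI allI impI)
      fix as :: "'a list" and j x y assume h: "length as = k \<and> j < k"
      show "(\<Sum>r = 1..k. \<eta> k r al (as[j := x + y])) = (\<Sum>r = 1..k. \<eta> k r al (as[j := x])) + (\<Sum>r = 1..k. \<eta> k r al (as[j := y]))"
        unfolding sum.distrib[symmetric] by (rule sum.cong) (use ml h in \<open>auto simp: multilinear_deg_def\<close>)
    next
      fix as :: "'a list" and j c x assume h: "length as = k \<and> j < k"
      show "(\<Sum>r = 1..k. \<eta> k r al (as[j := scale c x])) = scale c (\<Sum>r = 1..k. \<eta> k r al (as[j := x]))"
        unfolding module.scale_sum_right[OF M] by (rule sum.cong) (use ml h in \<open>auto simp: multilinear_deg_def\<close>)
    next
      fix as :: "'a list" and ds assume h: "length as = k \<and> length ds = k \<and> (\<forall>j<k. as ! j \<in> G (ds ! j))"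
      show "(\<Sum>r = 1..k. \<eta> k r al as) \<in> G (sum_list ds + int k - 2)"
        by (rule module.subspace_sum[OF M SS]) (use ml h in \<open>auto simp: multilinear_deg_def\<close>)
    qed
  qed
  have part2: "(\<Sum>m = 1..N. \<Sum>i = 1..m.
           scale (stasheff_sign i (N + 1 - m) ds)
             ((\<Sum>r = 1..m. \<eta> m r (lab_comp i (N + 1 - m) al)
               (arg_comp i (N + 1 - m)
                  (\<Sum>t = 1..N + 1 - m. \<eta> (N + 1 - m) t (blk i (N + 1 - m) al) (blk i (N + 1 - m) as)) as)))) = 0"
    if h: "N \<ge> 1" "length al = N" "length as = N" "length ds = N" "\<forall>j<N. as ! j \<in> G (ds ! j)" for N al as ds
  proof -
    have "0 = (\<Sum>r = 1..N. (\<Sum>m = 1..N. \<Sum>i = 1..m.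
           scale (stasheff_sign i (N + 1 - m) ds)
             (\<eta> m (R0 i (N + 1 - m) r) (lab_comp i (N + 1 - m) al)
               (arg_comp i (N + 1 - m)
                  (eta_Ri \<eta> i (N + 1 - m) r (blk i (N + 1 - m) al) (blk i (N + 1 - m) as)) as))))"
      by (rule sym, rule sum.neutral) (use D3 h in auto)
    also have "\<dots> = (\<Sum>m = 1..N. \<Sum>i = 1..m. \<Sum>r = 1..N.
           scale (stasheff_sign i (N + 1 - m) ds)
             (\<eta> m (R0 i (N + 1 - m) r) (lab_comp i (N + 1 - m) al)
               (arg_comp i (N + 1 - m)
                  (eta_Ri \<eta> i (N + 1 - m) r (blk i (N + 1 - m) al) (blk i (N + 1 - m) as)) as)))"
      by (subst sum.swap, rule sum.cong, simp, subst sum.swap, simp)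
    also have "\<dots> = (\<Sum>m = 1..N. \<Sum>i = 1..m.
           scale (stasheff_sign i (N + 1 - m) ds)
             ((\<Sum>r = 1..m. \<eta> m r (lab_comp i (N + 1 - m) al)
               (arg_comp i (N + 1 - m)
                  (\<Sum>t = 1..N + 1 - m. \<eta> (N + 1 - m) t (blk i (N + 1 - m) al) (blk i (N + 1 - m) as)) as))))"
    proof (rule sum.cong[OF refl], rule sum.cong[OF refl])
      fix m i assume mi: "m \<in> {1..N}" "i \<in> {1..m}"
      have NN: "N = m + (N + 1 - m) - 1" using mi by auto
      have kk: "(\<Sum>r=1..m + (N + 1 - m) - 1. \<eta> m (R0 i (N + 1 - m) r) (lab_comp i (N + 1 - m) al)
               (arg_comp i (N + 1 - m) (eta_Ri \<eta> i (N + 1 - m) r (blk i (N + 1 - m) al) (blk i (N + 1 - m) as)) as))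
       = (\<Sum>s=1..m. \<eta> m s (lab_comp i (N + 1 - m) al) (arg_comp i (N + 1 - m) (\<Sum>t=1..N + 1 - m. \<eta> (N + 1 - m) t (blk i (N + 1 - m) al) (blk i (N + 1 - m) as)) as))"
        by (rule key[where scale=scale and G=G]) (use D1 mi h NN in auto)
      show "(\<Sum>r = 1..N. scale (stasheff_sign i (N + 1 - m) ds)
             (\<eta> m (R0 i (N + 1 - m) r) (lab_comp i (N + 1 - m) al)
               (arg_comp i (N + 1 - m)
                  (eta_Ri \<eta> i (N + 1 - m) r (blk i (N + 1 - m) al) (blk i (N + 1 - m) as)) as)))
         = scale (stasheff_sign i (N + 1 - m) ds)
             ((\<Sum>r = 1..m. \<eta> m r (lab_comp i (N + 1 - m) al)
               (arg_comp i (N + 1 - m)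
                  (\<Sum>t = 1..N + 1 - m. \<eta> (N + 1 - m) t (blk i (N + 1 - m) al) (blk i (N + 1 - m) as)) as)))"
        unfolding module.scale_sum_right[OF M, symmetric] using kk NN by simp
    qed
    finally show ?thesis by simp
  qed
  show ?thesis unfolding A_inf_algebra_def
    using part1 part2 by auto
qed

end
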